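(* Assume (A1)–(A3) and let $\bar u_{\bar e}\in S(\bar e)$. Then $\widehat N((\bar e,\bar u_{\bar e});\operatorname{gph}\mathcal U_{ad})=\{(e^*,u^* )\in E^*\times L^2(\Omega): e^*=(0,0,e^*_\alpha,e^*_\beta),\ u^*=-e^*_\alpha-e^*_\beta,\ e^*_\alpha\ge0\text{ on }\Omega_1(\bar e,\bar u_{\bar e}),\ e^*_\alpha=0\text{ on }\Omega\setminus\Omega_1(\bar e,\bar u_{\bar e}),\ e^*_\beta\le0\text{ on }\Omega_3(\bar e,\bar u_{\bar e}),\ e^*_\beta=0\text{ on }\Omega\setminus\Omega_3(\bar e,\bar u_{\bar e})\}$.
   Context: Let $\Omega\subset\mathbb R^N$, $N\in\{1,2,3\}$; $\alpha,\beta\in L^\infty(\Omega)$, $\alpha\le\beta$, $\alpha\not\equiv\beta$; $\zeta\in L^2(\Omega)$, $\zeta\ge0$. $Ay=-\sum_{i,j}\partial_{x_j}(a_{ij}\partial_{x_i}y)$. $L,f$ Carathéodory, $C^2$ in $y$, with (A1) $f(\cdot,0)\in L^{\bar p}$, $\bar p>N/2$, $\partial f/\partial y\ge0$, $|\partial f/\partial y|+|\partial^2f/\partial y^2|\le C_{f,M}$ for $|y|\le M$, $\partial^2f/\partial y^2(x,\cdot)$ uniformly continuous on $[-M,M]$ uniformly in $x$; (A2) $L(\cdot,0)\in L^1$, $|\partial L/\partial y|\le\psi_M\in L^{\bar p}$, $|\partial^2L/\partial y^2|\le C_{L,M}$ for $|y|\le M$, $\partial^2L/\partial y^2(x,\cdot)$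 uniformly continuous likewise; (A3) $\Omega$ open bounded with Lipschitz boundary $\Gamma$, $\mathcal Q\subset L^2(\Omega)$ closed convex bounded with $\mathcal U_{ad}(e)\cap\operatorname{int}\mathcal Q\ne\emptyset$ for some $e$, $a_{ij}\in C(\bar\Omega)$ uniformly elliptic. $y_u$ solves $Ay+f(x,y)=u$, $y=0$ on $\Gamma$; $J(u)=\int_\Omega L(x,y_u)+\frac12\int_\Omega\zeta u^2$. $E=L^2(\Omega)^4$, $e=(e_y,e_J,e_\alpha,e_\beta)$ with sum norm; $\mathcal U_{ad}(e)=\{u\in L^2:\alpha+e_\alpha\le u\le\beta+e_\beta\text{ a.e.}\}$ viewed as a multifunction $E\rightrightarrows L^2(\Omega)$; $\mathcal G(e)=\mathcal U_{ad}(e)\cap\mathcal Q$; $\mathcal J(u,e)=J(u+e_y)+(e_J,y_{u+e_y})_{L^2}$; $S(e)=\{u\in\mathcal G(e):\mathcal J(u,e)=\inf_{\mathcal G(e)}\mathcal J(\cdot,e)\}$. $\Omega_1(e,u)=\{x:u(x)=\alpha(x)+e_\alpha(x)\}$, $\Omega_3(e,u)=\{x:u(x)=\beta(x)+e_\beta(x)\}$. $\widehat N$ denotes the regular (Fréchet) normal cone. *)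

theory Defs
  imports "HOL-Analysis.Analysis"
begin

type_synonym 'n fn = "real^'n \<Rightarrow> real"
type_synonym 'n pert = "'n fn \<times> 'n fn \<times> 'n fn \<times> 'n fn"

section \<open>L^2(Omega): square integrable functions (elements are representatives)\<close>

definition L2sp :: "(real^'n) set \<Rightarrow> 'n fn set" where
  "L2sp \<Omega> = {f. f \<in> borel_measurable (lebesgue_on \<Omega>) \<and>
                  integrable (lebesgue_on \<Omega>) (\<lambda>x. (f x)^2)}"

definition l2ip :: "(real^'n) set \<Rightarrow> 'n fn \<Rightarrow> 'n fn \<Rightarrow> real" where
  "l2ip \<Omega> f g = integral\<^sup>L (lebesgue_on \<Omega>) (\<lambda>x. f x * g x)"

definition l2nrm :: "(real^'n) set \<Rightarrow> 'n fn \<Rightarrow> real" where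
  "l2nrm \<Omega> f = sqrt (integral\<^sup>L (lebesgue_on \<Omega>) (\<lambda>x. (f x)^2))"

definition Linf :: "(real^'n) set \<Rightarrow> 'n fn set" where
  "Linf \<Omega> = {f. f \<in> borel_measurable (lebesgue_on \<Omega>) \<and>
                 (\<exists>C. AE x in lebesgue_on \<Omega>. \<bar>f x\<bar> \<le> C)}"

definition Lp :: "(real^'n) set \<Rightarrow> real \<Rightarrow> 'n fn set" where
  "Lp \<Omega> p = {f. f \<in> borel_measurable (lebesgue_on \<Omega>) \<and>
                 integrable (lebesgue_on \<Omega>) (\<lambda>x. \<bar>f x\<bar> powr p)}"

definition e_y :: "'n pert \<Rightarrow> 'n fn" where "e_y e = fst e"
definition e_J :: "'n pert \<Rightarrow> 'n fn" where "e_J e = fst (snd e)"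
definition e_al :: "'n pert \<Rightarrow> 'n fn" where "e_al e = fst (snd (snd e))"
definition e_be :: "'n pert \<Rightarrow> 'n fn" where "e_be e = snd (snd (snd e))"

definition Esp :: "(real^'n) set \<Rightarrow> 'n pert set" where
  "Esp \<Omega> = {e. e_y e \<in> L2sp \<Omega> \<and> e_J e \<in> L2sp \<Omega> \<and> e_al e \<in> L2sp \<Omega> \<and> e_be e \<in> L2sp \<Omega>}"

definition Enrm :: "(real^'n) set \<Rightarrow> 'n pert \<Rightarrow> real" where
  "Enrm \<Omega> e = l2nrm \<Omega> (e_y e) + l2nrm \<Omega> (e_J e) + l2nrm \<Omega> (e_al e) + l2nrm \<Omega> (e_be e)"

text \<open>duality pairing of E* (identified with L^2^4 via Riesz) with E\<close>
definition Epair :: "(real^'n) set \<Rightarrow> 'n pert \<Rightarrow> 'n pert \<Rightarrow> real" where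
  "Epair \<Omega> es e = l2ip \<Omega> (e_y es) (e_y e) + l2ip \<Omega> (e_J es) (e_J e)
                 + l2ip \<Omega> (e_al es) (e_al e) + l2ip \<Omega> (e_be es) (e_be e)"

definition Esub :: "'n pert \<Rightarrow> 'n pert \<Rightarrow> 'n pert" where
  "Esub e e' = (e_y e - e_y e', e_J e - e_J e', e_al e - e_al e', e_be e - e_be e')"

definition Pnrm :: "(real^'n) set \<Rightarrow> 'n pert \<times> 'n fn \<Rightarrow> real" where
  "Pnrm \<Omega> z = Enrm \<Omega> (fst z) + l2nrm \<Omega> (snd z)"

definition Ppair :: "(real^'n) set \<Rightarrow> 'n pert \<times> 'n fn \<Rightarrow> 'n pert \<times> 'n fn \<Rightarrow> real" where
  "Ppair \<Omega> zs z = Epair \<Omega> (fst zs) (fst z) + l2ip \<Omega> (snd zs) (snd z)"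

definition Psub :: "'n pert \<times> 'n fn \<Rightarrow> 'n pert \<times> 'n fn \<Rightarrow> 'n pert \<times> 'n fn" where
  "Psub z z' = (Esub (fst z) (fst z'), snd z - snd z')"

text \<open>Regular (Frechet) normal cone to a set C of E x L^2 at zb, as a subset of
  the dual E* x L^2 (identified with E x L^2):
  zs is normal iff limsup_{z -> zb, z in C} <zs, z - zb> / ||z - zb|| <= 0.\<close>
definition frechet_normal_cone ::
  "(real^'n) set \<Rightarrow> ('n pert \<times> 'n fn) set \<Rightarrow> 'n pert \<times> 'n fn \<Rightarrow> ('n pert \<times> 'n fn) set" where
  "frechet_normal_cone \<Omega> C zb =
     {zs. fst zs \<in> Esp \<Omega> \<and> snd zs \<in> L2sp \<Omega> \<and> zb \<in> C \<and>
          (\<forall>\<epsilon>>0. \<exists>\<delta>>0. \<forall>z\<in>C. Pnrm \<Omega> (Psub z zb) < \<delta> \<longrightarrow>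
              Ppair \<Omega> zs (Psub z zb) \<le> \<epsilon> * Pnrm \<Omega> (Psub z zb))}"

definition Uad :: "(real^'n) set \<Rightarrow> 'n fn \<Rightarrow> 'n fn \<Rightarrow> 'n pert \<Rightarrow> 'n fn set" where
  "Uad \<Omega> \<alpha> \<beta> e = {u \<in> L2sp \<Omega>. AE x in lebesgue_on \<Omega>.
                        \<alpha> x + e_al e x \<le> u x \<and> u x \<le> \<beta> x + e_be e x}"

definition gphUad :: "(real^'n) set \<Rightarrow> 'n fn \<Rightarrow> 'n fn \<Rightarrow> ('n pert \<times> 'n fn) set" where
  "gphUad \<Omega> \<alpha> \<beta> = {(e, u). e \<in> Esp \<Omega> \<and> u \<in> Uad \<Omega> \<alpha> \<beta> e}"

definition Omega1 :: "(real^'n) set \<Rightarrow> 'n fn \<Rightarrow> 'n pert \<Rightarrow> 'n fn \<Rightarrow> (real^'n) set" where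
  "Omega1 \<Omega> \<alpha> e u = {x \<in> \<Omega>. u x = \<alpha> x + e_al e x}"

definition Omega3 :: "(real^'n) set \<Rightarrow> 'n fn \<Rightarrow> 'n pert \<Rightarrow> 'n fn \<Rightarrow> (real^'n) set" where
  "Omega3 \<Omega> \<beta> e u = {x \<in> \<Omega>. u x = \<beta> x + e_be e x}"

definition lipschitz_boundary :: "(real^('n::finite)) set \<Rightarrow> bool" where
  "lipschitz_boundary \<Omega> \<longleftrightarrow>
     (\<forall>p\<in>frontier \<Omega>. \<exists>r>0. \<exists>(T::real^'n \<Rightarrow> real^'n) (k::'n) (h::real^'n \<Rightarrow> real) (B::real).
        orthogonal_transformation T \<and> B-lipschitz_on UNIV h \<and>
        (\<forall>z w. (\<forall>i. i \<noteq> k \<longrightarrow> z$i = w$i) \<longrightarrow> h z = h w) \<and>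
        \<Omega> \<inter> ball p r = {x \<in> ball p r. (T (x - p))$k < h (T (x - p))})"

fun dpart :: "('n::finite) list \<Rightarrow> 'n fn \<Rightarrow> 'n fn" where
  "dpart [] \<phi> = \<phi>"
| "dpart (i # is) \<phi> = (\<lambda>x. frechet_derivative (dpart is \<phi>) (at x) (axis i 1))"

definition test_fun :: "(real^('n::finite)) set \<Rightarrow> 'n fn \<Rightarrow> bool" where
  "test_fun \<Omega> \<phi> \<longleftrightarrow> (\<forall>is x. dpart is \<phi> differentiable (at x)) \<and>
      compact (closure {x. \<phi> x \<noteq> 0}) \<and> closure {x. \<phi> x \<noteq> 0} \<subseteq> \<Omega>"

definition weak_deriv :: "(real^('n::finite)) set \<Rightarrow> 'n fn \<Rightarrow> 'n \<Rightarrow> 'n fn \<Rightarrow> bool" where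
  "weak_deriv \<Omega> y i g \<longleftrightarrow> (\<forall>\<phi>. test_fun \<Omega> \<phi> \<longrightarrow>
      integral\<^sup>L (lebesgue_on \<Omega>) (\<lambda>x. y x * dpart [i] \<phi> x) =
      - integral\<^sup>L (lebesgue_on \<Omega>) (\<lambda>x. g x * \<phi> x))"

definition H10 :: "(real^('n::finite)) set \<Rightarrow> 'n fn \<Rightarrow> bool" where
  "H10 \<Omega> y \<longleftrightarrow> y \<in> L2sp \<Omega> \<and>
     (\<exists>G. (\<forall>i. G i \<in> L2sp \<Omega> \<and> weak_deriv \<Omega> y i (G i)) \<and>
        (\<exists>\<phi>s. (\<forall>k. test_fun \<Omega> (\<phi>s k)) \<and>
              (\<lambda>k. l2nrm \<Omega> (\<phi>s k - y)) \<longlonglongrightarrow> 0 \<and>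
              (\<forall>i. (\<lambda>k. l2nrm \<Omega> (dpart [i] (\<phi>s k) - G i)) \<longlonglongrightarrow> 0)))"

text \<open>y is a (bounded) weak solution of  A y + f(x,y) = u in Omega, y = 0 on the boundary,
  with A y = - sum_{i,j} d_{x_j}(a_ij d_{x_i} y).\<close>
definition state_sol ::
  "(real^('n::finite)) set \<Rightarrow> ('n \<Rightarrow> 'n \<Rightarrow> 'n fn) \<Rightarrow> (real^'n \<Rightarrow> real \<Rightarrow> real) \<Rightarrow> 'n fn \<Rightarrow> 'n fn \<Rightarrow> bool" where
  "state_sol \<Omega> a f u y \<longleftrightarrow> H10 \<Omega> y \<and> y \<in> Linf \<Omega> \<and>
     (\<exists>G. (\<forall>i. G i \<in> L2sp \<Omega> \<and> weak_deriv \<Omega> y i (G i)) \<and>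
       (\<forall>\<phi>. test_fun \<Omega> \<phi> \<longrightarrow>
          integral\<^sup>L (lebesgue_on \<Omega>)
            (\<lambda>x. (\<Sum>i\<in>UNIV. \<Sum>j\<in>UNIV. a i j x * G i x * dpart [j] \<phi> x) + f x (y x) * \<phi> x)
          = integral\<^sup>L (lebesgue_on \<Omega>) (\<lambda>x. u x * \<phi> x)))"

definition ystate ::
  "(real^('n::finite)) set \<Rightarrow> ('n \<Rightarrow> 'n \<Rightarrow> 'n fn) \<Rightarrow> (real^'n \<Rightarrow> real \<Rightarrow> real) \<Rightarrow> 'n fn \<Rightarrow> 'n fn" where
  "ystate \<Omega> a f u = (SOME y. state_sol \<Omega> a f u y)"

definition Jcost ::
  "(real^('n::finite)) set \<Rightarrow> ('n \<Rightarrow> 'n \<Rightarrow> 'n fn) \<Rightarrow> (real^'n \<Rightarrow> real \<Rightarrow> real) \<Rightarrow>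
   (real^'n \<Rightarrow> real \<Rightarrow> real) \<Rightarrow> 'n fn \<Rightarrow> 'n fn \<Rightarrow> real" where
  "Jcost \<Omega> a f L \<zeta> u =
     integral\<^sup>L (lebesgue_on \<Omega>) (\<lambda>x. L x (ystate \<Omega> a f u x))
     + 1/2 * integral\<^sup>L (lebesgue_on \<Omega>) (\<lambda>x. \<zeta> x * (u x)^2)"

definition Jpert ::
  "(real^('n::finite)) set \<Rightarrow> ('n \<Rightarrow> 'n \<Rightarrow> 'n fn) \<Rightarrow> (real^'n \<Rightarrow> real \<Rightarrow> real) \<Rightarrow>
   (real^'n \<Rightarrow> real \<Rightarrow> real) \<Rightarrow> 'n fn \<Rightarrow> 'n fn \<Rightarrow> 'n pert \<Rightarrow> real" where
  "Jpert \<Omega> a f L \<zeta> u e =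
     Jcost \<Omega> a f L \<zeta> (\<lambda>x. u x + e_y e x) + l2ip \<Omega> (e_J e) (ystate \<Omega> a f (\<lambda>x. u x + e_y e x))"

definition Gfeas :: "(real^'n) set \<Rightarrow> 'n fn \<Rightarrow> 'n fn \<Rightarrow> 'n fn set \<Rightarrow> 'n pert \<Rightarrow> 'n fn set" where
  "Gfeas \<Omega> \<alpha> \<beta> Q e = Uad \<Omega> \<alpha> \<beta> e \<inter> Q"

definition Sopt ::
  "(real^('n::finite)) set \<Rightarrow> ('n \<Rightarrow> 'n \<Rightarrow> 'n fn) \<Rightarrow> (real^'n \<Rightarrow> real \<Rightarrow> real) \<Rightarrow>
   (real^'n \<Rightarrow> real \<Rightarrow> real) \<Rightarrow> 'n fn \<Rightarrow> 'n fn \<Rightarrow> 'n fn \<Rightarrow> 'n fn set \<Rightarrow> 'n pert \<Rightarrow> 'n fn set" where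
  "Sopt \<Omega> a f L \<zeta> \<alpha> \<beta> Q e =
     {u \<in> Gfeas \<Omega> \<alpha> \<beta> Q e. \<forall>v \<in> Gfeas \<Omega> \<alpha> \<beta> Q e. Jpert \<Omega> a f L \<zeta> u e \<le> Jpert \<Omega> a f L \<zeta> v e}"

end

theory Submission imports Defs begin

lemma L2_meas: "f \<in> L2sp \<Omega> \<Longrightarrow> f \<in> borel_measurable (lebesgue_on \<Omega>)"
  by (simp add: L2sp_def)

lemma L2_sq: "f \<in> L2sp \<Omega> \<Longrightarrow> integrable (lebesgue_on \<Omega>) (\<lambda>x. (f x)^2)"
  by (simp add: L2sp_def)

lemma L2_prod:
  assumes "f \<in> L2sp \<Omega>" "g \<in> L2sp \<Omega>"
  shows "integrable (lebesgue_on \<Omega>) (\<lambda>x. f x * g x)"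
proof -
  have a: "integrable (lebesgue_on \<Omega>) (\<lambda>x. (f x)^2 + (g x)^2)"
    using L2_sq[OF assms(1)] L2_sq[OF assms(2)] by (rule Bochner_Integration.integrable_add)
  have b: "(\<lambda>x. f x * g x) \<in> borel_measurable (lebesgue_on \<Omega>)"
    using L2_meas[OF assms(1)] L2_meas[OF assms(2)] by (rule borel_measurable_times)
  have c: "AE x in lebesgue_on \<Omega>. norm (f x * g x) \<le> norm ((f x)^2 + (g x)^2)"
  proof (intro AE_I2)
    fix x
    have "0 \<le> (\<bar>f x\<bar> - \<bar>g x\<bar>)^2" by simp
    then have "0 \<le> (f x)^2 + (g x)^2 - 2 * (\<bar>f x\<bar> * \<bar>g x\<bar>)"
      unfolding power2_diff power2_abs by (simp add: mult.assoc)
    moreover have "0 \<le> (f x)^2" "0 \<le> (g x)^2" by simp_all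
    ultimately have "\<bar>f x\<bar> * \<bar>g x\<bar> \<le> (f x)^2 + (g x)^2"
      by linarith
    then show "norm (f x * g x) \<le> norm ((f x)^2 + (g x)^2)"
      by (simp add: abs_mult)
  qed
  show ?thesis by (rule Bochner_Integration.integrable_bound[OF a b c])
qed

lemma L2_bound:
  assumes "f \<in> L2sp \<Omega>" "g \<in> borel_measurable (lebesgue_on \<Omega>)"
    "AE x in lebesgue_on \<Omega>. \<bar>g x\<bar> \<le> \<bar>f x\<bar>"
  shows "g \<in> L2sp \<Omega>"
proof -
  have "integrable (lebesgue_on \<Omega>) (\<lambda>x. (g x)^2)"
  proof -
    have a: "integrable (lebesgue_on \<Omega>) (\<lambda>x. (f x)^2)" using assms by (intro L2_sq)
    have b: "(\<lambda>x. (g x)^2) \<in> borel_measurable (lebesgue_on \<Omega>)" unfolding power2_eq_square by (intro borel_measurable_times assms(2))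
    have c: "AE x in lebesgue_on \<Omega>. norm ((g x)^2) \<le> norm ((f x)^2)"
      using assms(3) by eventually_elim (simp add: abs_le_square_iff)
    show ?thesis by (rule Bochner_Integration.integrable_bound[OF a b c])
  qed
  then show ?thesis using assms(2) by (simp add: L2sp_def)
qed

lemma L2_add:
  assumes "f \<in> L2sp \<Omega>" "g \<in> L2sp \<Omega>"
  shows "(\<lambda>x. f x + g x) \<in> L2sp \<Omega>"
proof -
  have m: "(\<lambda>x. f x + g x) \<in> borel_measurable (lebesgue_on \<Omega>)"
    using L2_meas[OF assms(1)] L2_meas[OF assms(2)] by (rule borel_measurable_add)
  have "integrable (lebesgue_on \<Omega>) (\<lambda>x. (f x + g x)^2)"
  proof -
    have a: "integrable (lebesgue_on \<Omega>) (\<lambda>x. 2*(f x)^2 + 2*(g x)^2)"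
      using L2_sq[OF assms(1)] L2_sq[OF assms(2)] by (intro Bochner_Integration.integrable_add integrable_mult_right[where c=2])
    have b: "(\<lambda>x. (f x + g x)^2) \<in> borel_measurable (lebesgue_on \<Omega>)" unfolding power2_eq_square by (intro borel_measurable_times m)
    have c: "AE x in lebesgue_on \<Omega>. norm ((f x + g x)^2) \<le> norm (2*(f x)^2 + 2*(g x)^2)"
    proof (intro AE_I2)
      fix x
      have "0 \<le> (f x - g x)^2" by simp
      then have "(f x + g x)^2 \<le> 2*(f x)^2 + 2*(g x)^2"
        unfolding power2_diff power2_sum by linarith
      then show "norm ((f x + g x)^2) \<le> norm (2*(f x)^2 + 2*(g x)^2)"
        by simp
    qed
    show ?thesis by (rule Bochner_Integration.integrable_bound[OF a b c])
  qed
  then show ?thesis using m by (simp add: L2sp_def)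
qed

lemma L2_scale:
  assumes "f \<in> L2sp \<Omega>"
  shows "(\<lambda>x. c * f x) \<in> L2sp \<Omega>"
proof -
  have m: "(\<lambda>x. c * f x) \<in> borel_measurable (lebesgue_on \<Omega>)"
    using L2_meas[OF assms] by (rule borel_measurable_times[OF borel_measurable_const])
  have "integrable (lebesgue_on \<Omega>) (\<lambda>x. c^2 * (f x)^2)"
    using L2_sq[OF assms] by (rule integrable_mult_right)
  then have "integrable (lebesgue_on \<Omega>) (\<lambda>x. (c * f x)^2)"
    by (simp add: power_mult_distrib)
  then show ?thesis using m by (simp add: L2sp_def)
qed

lemma L2_zero: "(\<lambda>x. 0) \<in> L2sp \<Omega>"
  by (simp add: L2sp_def)

lemma l2ip_scale: "l2ip \<Omega> f (\<lambda>x. t * g x) = t * l2ip \<Omega> f g"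
proof -
  have "(\<lambda>x. f x * (t * g x)) = (\<lambda>x. t * (f x * g x))" by (simp add: algebra_simps)
  then show ?thesis by (simp add: l2ip_def)
qed

lemma l2nrm_scale: "0 \<le> t \<Longrightarrow> l2nrm \<Omega> (\<lambda>x. t * g x) = t * l2nrm \<Omega> g"
proof -
  assume t: "0 \<le> t"
  have "(\<lambda>x. (t * g x)^2) = (\<lambda>x. t^2 * (g x)^2)" by (simp add: power_mult_distrib)
  then show ?thesis using t by (simp add: l2nrm_def real_sqrt_mult)
qed

lemma l2nrm_nonneg: "0 \<le> l2nrm \<Omega> g"
  by (simp add: l2nrm_def)

lemma l2ip_zero: "l2ip \<Omega> f (\<lambda>x. 0) = 0"
  by (simp add: l2ip_def)

lemma l2ip_AE0:
  assumes "AE x in lebesgue_on \<Omega>. f x = 0"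
  shows "l2ip \<Omega> f g = 0"
proof -
  have "AE x in lebesgue_on \<Omega>. f x * g x = 0" using assms by eventually_elim simp
  then show ?thesis unfolding l2ip_def by (rule integral_eq_zero_AE)
qed

lemma sq_int_le0:
  assumes "f \<in> L2sp \<Omega>" "g \<in> L2sp \<Omega>" "AE x in lebesgue_on \<Omega>. 0 \<le> f x * g x"
    "l2ip \<Omega> f g \<le> 0"
  shows "AE x in lebesgue_on \<Omega>. f x * g x = 0"
proof -
  have i: "integrable (lebesgue_on \<Omega>) (\<lambda>x. f x * g x)" using assms by (intro L2_prod)
  have "0 \<le> l2ip \<Omega> f g" unfolding l2ip_def using assms(3) by (intro integral_nonneg_AE)
  then have "l2ip \<Omega> f g = 0" using assms(4) by simp
  then show ?thesis using integral_nonneg_eq_0_iff_AE[OF i assms(3)] by (simp add: l2ip_def)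
qed

lemma L2_diff:
  assumes "f \<in> L2sp \<Omega>" "g \<in> L2sp \<Omega>"
  shows "f - g \<in> L2sp \<Omega>"
proof -
  have e: "f - g = (\<lambda>x. f x + (-1) * g x)" by (simp add: fun_eq_iff)
  show ?thesis unfolding e by (rule L2_add[OF assms(1) L2_scale[OF assms(2)]])
qed

definition Pscale :: "real \<Rightarrow> 'n pert \<times> 'n fn \<Rightarrow> 'n pert \<times> 'n fn" where
  "Pscale t d = ((\<lambda>x. t * e_y (fst d) x, \<lambda>x. t * e_J (fst d) x, \<lambda>x. t * e_al (fst d) x,
                  \<lambda>x. t * e_be (fst d) x), \<lambda>x. t * snd d x)"

lemma Ppair_scale: "Ppair \<Omega> zs (Pscale t d) = t * Ppair \<Omega> zs d"
  by (simp add: Ppair_def Epair_def Pscale_def e_y_def e_J_def e_al_def e_be_def l2ip_scale algebra_simps)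

lemma Pnrm_scale: "0 \<le> t \<Longrightarrow> Pnrm \<Omega> (Pscale t d) = t * Pnrm \<Omega> d"
  by (simp add: Pnrm_def Enrm_def Pscale_def e_y_def e_J_def e_al_def e_be_def l2nrm_scale algebra_simps)

lemma Pnrm_nonneg: "0 \<le> Pnrm \<Omega> d"
  by (simp add: Pnrm_def Enrm_def l2nrm_nonneg)

lemma normal_dir:
  assumes zs: "zs \<in> frechet_normal_cone \<Omega> C zb"
    and feas: "\<And>t. 0 < t \<Longrightarrow> t \<le> 1 \<Longrightarrow> \<exists>z\<in>C. Psub z zb = Pscale t d"
  shows "Ppair \<Omega> zs d \<le> 0"
proof (rule ccontr)
  assume "\<not> ?thesis"
  then have P: "Ppair \<Omega> zs d > 0" by simp
  define N where "N = Pnrm \<Omega> d"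
  have N0: "0 \<le> N" using Pnrm_nonneg N_def by metis
  define \<epsilon> where "\<epsilon> = Ppair \<Omega> zs d / (2*(N+1))"
  have "\<epsilon> > 0" using P N0 by (simp add: \<epsilon>_def)
  then obtain \<delta> where \<delta>: "\<delta>>0" "\<forall>z\<in>C. Pnrm \<Omega> (Psub z zb) < \<delta> \<longrightarrow>
      Ppair \<Omega> zs (Psub z zb) \<le> \<epsilon> * Pnrm \<Omega> (Psub z zb)"
    using zs unfolding frechet_normal_cone_def by blast
  define t where "t = min 1 (\<delta>/(2*(N+1)))"
  have t0: "0<t" "t \<le> 1" using \<delta> N0 by (auto simp: t_def)
  then obtain z where z: "z\<in>C" "Psub z zb = Pscale t d" using feas by blast
  have "t * (N+1) \<le> \<delta>/(2*(N+1)) * (N+1)"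
    using N0 by (intro mult_right_mono) (auto simp: t_def)
  also have "\<dots> = \<delta>/2" using N0 by (simp add: field_simps)
  finally have "t * N < \<delta>" using \<delta> t0 by (simp add: algebra_simps)
  then have "t * Ppair \<Omega> zs d \<le> \<epsilon> * (t * N)"
    using \<delta>(2) z Ppair_scale[of \<Omega> zs t d] Pnrm_scale[of t \<Omega> d] t0 N_def by auto
  then have "t * Ppair \<Omega> zs d \<le> t * (\<epsilon> * N)" by (simp add: algebra_simps)
  then have "Ppair \<Omega> zs d \<le> \<epsilon> * N" using t0 by simp
  also have "\<epsilon> * N = Ppair \<Omega> zs d * (N / (2*(N+1)))" by (simp add: \<epsilon>_def)
  also have "\<dots> < Ppair \<Omega> zs d * 1"
    using P N0 by (intro mult_strict_left_mono) (auto simp: field_simps)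
  finally show False by simp
qed

lemma L2_diff':
  assumes "f \<in> L2sp \<Omega>" "g \<in> L2sp \<Omega>"
  shows "(\<lambda>x. f x - g x) \<in> L2sp \<Omega>"
  using L2_diff[OF assms] by (simp add: fun_diff_def)

lemma L2_addscale:
  assumes "f \<in> L2sp \<Omega>" "g \<in> L2sp \<Omega>"
  shows "(\<lambda>x. f x + t * g x) \<in> L2sp \<Omega>"
  by (rule L2_add[OF assms(1) L2_scale[OF assms(2)]])

lemma Psub_eq: "Psub ((y,J,al,be),u) ((y0,J0,al0,be0),u0) =
   ((\<lambda>x. y x - y0 x, \<lambda>x. J x - J0 x, \<lambda>x. al x - al0 x, \<lambda>x. be x - be0 x), \<lambda>x. u x - u0 x)"
  by (simp add: Psub_def Esub_def e_y_def e_J_def e_al_def e_be_def fun_diff_def)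

lemma Pscale_eq: "Pscale t ((d1,d2,d3,d4),du) =
   ((\<lambda>x. t * d1 x, \<lambda>x. t * d2 x, \<lambda>x. t * d3 x, \<lambda>x. t * d4 x), \<lambda>x. t * du x)"
  by (simp add: Pscale_def e_y_def e_J_def e_al_def e_be_def)

lemma Ppair_eq: "Ppair \<Omega> ((a1,a2,a3,a4),us) ((d1,d2,d3,d4),du) =
   l2ip \<Omega> a1 d1 + l2ip \<Omega> a2 d2 + l2ip \<Omega> a3 d3 + l2ip \<Omega> a4 d4 + l2ip \<Omega> us du"
  by (simp add: Ppair_def Epair_def e_y_def e_J_def e_al_def e_be_def)

lemma gph_mem:
  assumes "y \<in> L2sp \<Omega>" "J \<in> L2sp \<Omega>" "al \<in> L2sp \<Omega>" "be \<in> L2sp \<Omega>" "u \<in> L2sp \<Omega>"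
    "AE x in lebesgue_on \<Omega>. \<alpha> x + al x \<le> u x \<and> u x \<le> \<beta> x + be x"
  shows "((y,J,al,be),u) \<in> gphUad \<Omega> \<alpha> \<beta>"
  using assms by (simp add: gphUad_def Esp_def Uad_def e_y_def e_J_def e_al_def e_be_def)

lemma l2ip_add_left:
  assumes "f \<in> L2sp \<Omega>" "g \<in> L2sp \<Omega>" "h \<in> L2sp \<Omega>"
  shows "l2ip \<Omega> f h + l2ip \<Omega> g h = l2ip \<Omega> (\<lambda>x. f x + g x) h"
proof -
  have "(\<lambda>x. (f x + g x) * h x) = (\<lambda>x. f x * h x + g x * h x)" by (simp add: algebra_simps)
  then show ?thesis unfolding l2ip_def
    using Bochner_Integration.integral_add[OF L2_prod[OF assms(1,3)] L2_prod[OF assms(2,3)]] by simp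
qed

lemma scale_le_max: "0 < t \<Longrightarrow> t \<le> 1 \<Longrightarrow> t * (d::real) \<le> max d 0"
  by (cases "d \<le> 0") (auto simp: mult_nonneg_nonpos mult_left_le_one_le max_def)

lemma scale_ge_min: "0 < t \<Longrightarrow> t \<le> 1 \<Longrightarrow> min d 0 \<le> t * (d::real)"
  by (cases "d \<le> 0") (auto simp: mult_left_le_one_le min_def mult_le_cancel_right1)

lemma core_sub:
  fixes y0 J0 al0 be0 ub a1 a2 a3 a4 us \<alpha> \<beta> :: "real^'n \<Rightarrow> real"
  assumes eb: "(y0,J0,al0,be0) \<in> Esp \<Omega>" and ub: "ub \<in> Uad \<Omega> \<alpha> \<beta> (y0,J0,al0,be0)"
    and am: "\<alpha> \<in> borel_measurable (lebesgue_on \<Omega>)"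
    and bm: "\<beta> \<in> borel_measurable (lebesgue_on \<Omega>)"
    and zs: "((a1,a2,a3,a4),us) \<in> frechet_normal_cone \<Omega> (gphUad \<Omega> \<alpha> \<beta>) ((y0,J0,al0,be0),ub)"
  shows "(AE x in lebesgue_on \<Omega>. a1 x = 0) \<and>
       (AE x in lebesgue_on \<Omega>. a2 x = 0) \<and>
       (AE x in lebesgue_on \<Omega>. us x = - a3 x - a4 x) \<and>
       (AE x in lebesgue_on \<Omega>. x \<in> Omega1 \<Omega> \<alpha> (y0,J0,al0,be0) ub \<longrightarrow> a3 x \<ge> 0) \<and>
       (AE x in lebesgue_on \<Omega>. x \<notin> Omega1 \<Omega> \<alpha> (y0,J0,al0,be0) ub \<longrightarrow> a3 x = 0) \<and>
       (AE x in lebesgue_on \<Omega>. x \<in> Omega3 \<Omega> \<beta> (y0,J0,al0,be0) ub \<longrightarrow> a4 x \<le> 0) \<and>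
       (AE x in lebesgue_on \<Omega>. x \<notin> Omega3 \<Omega> \<beta> (y0,J0,al0,be0) ub \<longrightarrow> a4 x = 0)"
proof -
  have zs': "(a1,a2,a3,a4) \<in> Esp \<Omega>" "us \<in> L2sp \<Omega>" using zs by (auto simp: frechet_normal_cone_def)
  then have La: "a1 \<in> L2sp \<Omega>" "a2 \<in> L2sp \<Omega>" "a3 \<in> L2sp \<Omega>" "a4 \<in> L2sp \<Omega>" "us \<in> L2sp \<Omega>"
    by (auto simp: Esp_def e_y_def e_J_def e_al_def e_be_def)
  have Lb: "y0 \<in> L2sp \<Omega>" "J0 \<in> L2sp \<Omega>" "al0 \<in> L2sp \<Omega>" "be0 \<in> L2sp \<Omega>" "ub \<in> L2sp \<Omega>"
    using eb ub by (auto simp: Esp_def Uad_def e_y_def e_J_def e_al_def e_be_def)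
  have ubAE: "AE x in lebesgue_on \<Omega>. \<alpha> x + al0 x \<le> ub x \<and> ub x \<le> \<beta> x + be0 x"
    using ub by (simp add: Uad_def e_al_def e_be_def)
  note Z = L2_zero[of \<Omega>]
  have "Ppair \<Omega> ((a1,a2,a3,a4),us) ((a1, \<lambda>x. 0, \<lambda>x. 0, \<lambda>x. 0), \<lambda>x. 0) \<le> 0"
  proof (rule normal_dir[OF zs])
    fix t :: real assume t: "0 < t" "t \<le> 1"
    have "((\<lambda>x. y0 x + t * a1 x, J0, al0, be0), ub) \<in> gphUad \<Omega> \<alpha> \<beta>"
      by (rule gph_mem[OF L2_addscale[OF Lb(1) La(1)] Lb(2-5) ubAE])
    moreover have "Psub ((\<lambda>x. y0 x + t * a1 x, J0, al0, be0), ub) ((y0,J0,al0,be0),ub)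
       = Pscale t ((a1, \<lambda>x. 0, \<lambda>x. 0, \<lambda>x. 0), \<lambda>x. 0)"
      by (simp add: Psub_eq Pscale_eq)
    ultimately show "\<exists>z\<in>gphUad \<Omega> \<alpha> \<beta>. Psub z ((y0,J0,al0,be0),ub) = Pscale t ((a1, \<lambda>x. 0, \<lambda>x. 0, \<lambda>x. 0), \<lambda>x. 0)"
      by blast
  qed
  then have "l2ip \<Omega> a1 a1 \<le> 0" by (simp add: Ppair_eq l2ip_zero)
  then have "AE x in lebesgue_on \<Omega>. a1 x * a1 x = 0" by (intro sq_int_le0 La) auto
  then have R1: "AE x in lebesgue_on \<Omega>. a1 x = 0" by eventually_elim simp
  have "Ppair \<Omega> ((a1,a2,a3,a4),us) ((\<lambda>x. 0, a2, \<lambda>x. 0, \<lambda>x. 0), \<lambda>x. 0) \<le> 0"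
  proof (rule normal_dir[OF zs])
    fix t :: real assume t: "0 < t" "t \<le> 1"
    have "((y0, \<lambda>x. J0 x + t * a2 x, al0, be0), ub) \<in> gphUad \<Omega> \<alpha> \<beta>"
      by (rule gph_mem[OF Lb(1) L2_addscale[OF Lb(2) La(2)] Lb(3-5) ubAE])
    moreover have "Psub ((y0, \<lambda>x. J0 x + t * a2 x, al0, be0), ub) ((y0,J0,al0,be0),ub)
       = Pscale t ((\<lambda>x. 0, a2, \<lambda>x. 0, \<lambda>x. 0), \<lambda>x. 0)"
      by (simp add: Psub_eq Pscale_eq)
    ultimately show "\<exists>z\<in>gphUad \<Omega> \<alpha> \<beta>. Psub z ((y0,J0,al0,be0),ub) = Pscale t ((\<lambda>x. 0, a2, \<lambda>x. 0, \<lambda>x. 0), \<lambda>x. 0)"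
      by blast
  qed
  then have "l2ip \<Omega> a2 a2 \<le> 0" by (simp add: Ppair_eq l2ip_zero)
  then have "AE x in lebesgue_on \<Omega>. a2 x * a2 x = 0" by (intro sq_int_le0 La) auto
  then have R2: "AE x in lebesgue_on \<Omega>. a2 x = 0" by eventually_elim simp
  define h where "h = (\<lambda>x. a3 x + a4 x + us x)"
  have Lh: "h \<in> L2sp \<Omega>" unfolding h_def by (intro L2_add La)
  have "Ppair \<Omega> ((a1,a2,a3,a4),us) ((\<lambda>x. 0, \<lambda>x. 0, h, h), h) \<le> 0"
  proof (rule normal_dir[OF zs])
    fix t :: real assume t: "0 < t" "t \<le> 1"
    have "AE x in lebesgue_on \<Omega>. \<alpha> x + (al0 x + t * h x) \<le> ub x + t * h x \<and>
        ub x + t * h x \<le> \<beta> x + (be0 x + t * h x)"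
      using ubAE by eventually_elim auto
    then have "((y0, J0, \<lambda>x. al0 x + t * h x, \<lambda>x. be0 x + t * h x), \<lambda>x. ub x + t * h x) \<in> gphUad \<Omega> \<alpha> \<beta>"
      by (rule gph_mem[OF Lb(1,2) L2_addscale[OF Lb(3) Lh] L2_addscale[OF Lb(4) Lh] L2_addscale[OF Lb(5) Lh]])
    moreover have "Psub ((y0, J0, \<lambda>x. al0 x + t * h x, \<lambda>x. be0 x + t * h x), \<lambda>x. ub x + t * h x) ((y0,J0,al0,be0),ub)
       = Pscale t ((\<lambda>x. 0, \<lambda>x. 0, h, h), h)"
      by (simp add: Psub_eq Pscale_eq)
    ultimately show "\<exists>z\<in>gphUad \<Omega> \<alpha> \<beta>. Psub z ((y0,J0,al0,be0),ub) = Pscale t ((\<lambda>x. 0, \<lambda>x. 0, h, h), h)"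
      by blast
  qed
  then have "l2ip \<Omega> a3 h + l2ip \<Omega> a4 h + l2ip \<Omega> us h \<le> 0" by (simp add: Ppair_eq l2ip_zero)
  also have "l2ip \<Omega> a3 h + l2ip \<Omega> a4 h + l2ip \<Omega> us h = l2ip \<Omega> h h"
    unfolding h_def
    using l2ip_add_left[OF La(3) La(4) Lh] l2ip_add_left[OF L2_add[OF La(3) La(4)] La(5) Lh]
    by (simp add: h_def)
  finally have "AE x in lebesgue_on \<Omega>. h x * h x = 0" by (intro sq_int_le0 Lh) auto
  then have R3: "AE x in lebesgue_on \<Omega>. us x = - a3 x - a4 x" by eventually_elim (simp add: h_def)
  define d where "d = (\<lambda>x. min (a3 x) (max (ub x - \<alpha> x - al0 x) 0))"
  have Ld: "d \<in> L2sp \<Omega>"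
  proof (rule L2_bound[OF La(3)])
    show "d \<in> borel_measurable (lebesgue_on \<Omega>)"
      unfolding d_def using L2_meas[OF La(3)] L2_meas[OF Lb(5)] L2_meas[OF Lb(3)] am
      by (intro borel_measurable_min borel_measurable_max borel_measurable_diff borel_measurable_const)
    show "AE x in lebesgue_on \<Omega>. \<bar>d x\<bar> \<le> \<bar>a3 x\<bar>"
      by (intro AE_I2) (auto simp: d_def min_def max_def)
  qed
  have "Ppair \<Omega> ((a1,a2,a3,a4),us) ((\<lambda>x. 0, \<lambda>x. 0, d, \<lambda>x. 0), \<lambda>x. 0) \<le> 0"
  proof (rule normal_dir[OF zs])
    fix t :: real assume t: "0 < t" "t \<le> 1"
    have "AE x in lebesgue_on \<Omega>. \<alpha> x + (al0 x + t * d x) \<le> ub x \<and> ub x \<le> \<beta> x + be0 x"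
      using ubAE
    proof eventually_elim
      case (elim x)
      have "t * d x \<le> max (d x) 0" by (rule scale_le_max[OF t])
      moreover have "d x \<le> ub x - \<alpha> x - al0 x" using elim by (simp add: d_def)
      ultimately show ?case using elim by linarith
    qed
    then have "((y0, J0, \<lambda>x. al0 x + t * d x, be0), ub) \<in> gphUad \<Omega> \<alpha> \<beta>"
      by (rule gph_mem[OF Lb(1,2) L2_addscale[OF Lb(3) Ld] Lb(4,5)])
    moreover have "Psub ((y0, J0, \<lambda>x. al0 x + t * d x, be0), ub) ((y0,J0,al0,be0),ub)
       = Pscale t ((\<lambda>x. 0, \<lambda>x. 0, d, \<lambda>x. 0), \<lambda>x. 0)"
      by (simp add: Psub_eq Pscale_eq)
    ultimately show "\<exists>z\<in>gphUad \<Omega> \<alpha> \<beta>. Psub z ((y0,J0,al0,be0),ub) = Pscale t ((\<lambda>x. 0, \<lambda>x. 0, d, \<lambda>x. 0), \<lambda>x. 0)"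
      by blast
  qed
  then have "l2ip \<Omega> a3 d \<le> 0" by (simp add: Ppair_eq l2ip_zero)
  moreover have "AE x in lebesgue_on \<Omega>. 0 \<le> a3 x * d x"
  proof (intro AE_I2)
    fix x
    show "0 \<le> a3 x * d x"
    proof (cases "a3 x \<le> 0")
      case True
      then have "d x = a3 x" by (simp add: d_def)
      then show ?thesis by simp
    next
      case False
      then have "0 \<le> d x" by (simp add: d_def)
      then show ?thesis using False by simp
    qed
  qed
  ultimately have "AE x in lebesgue_on \<Omega>. a3 x * d x = 0" by (intro sq_int_le0 La Ld)
  then have R4: "AE x in lebesgue_on \<Omega>. 0 \<le> a3 x \<and> (x \<notin> Omega1 \<Omega> \<alpha> (y0,J0,al0,be0) ub \<longrightarrow> a3 x = 0)"
    using ubAE AE_space[of "lebesgue_on \<Omega>"]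
  proof eventually_elim
    case (elim x)
    then show ?case by (auto simp: d_def Omega1_def e_al_def min_def max_def split: if_splits)
  qed
  define d' where "d' = (\<lambda>x. max (a4 x) (- max (\<beta> x + be0 x - ub x) 0))"
  have Ld': "d' \<in> L2sp \<Omega>"
  proof (rule L2_bound[OF La(4)])
    show "d' \<in> borel_measurable (lebesgue_on \<Omega>)"
      unfolding d'_def using L2_meas[OF La(4)] L2_meas[OF Lb(5)] L2_meas[OF Lb(4)] bm
      by (intro borel_measurable_min borel_measurable_max borel_measurable_diff borel_measurable_add
          borel_measurable_uminus borel_measurable_const)
    show "AE x in lebesgue_on \<Omega>. \<bar>d' x\<bar> \<le> \<bar>a4 x\<bar>"
      by (intro AE_I2) (auto simp: d'_def min_def max_def)
  qed
  have "Ppair \<Omega> ((a1,a2,a3,a4),us) ((\<lambda>x. 0, \<lambda>x. 0, \<lambda>x. 0, d'), \<lambda>x. 0) \<le> 0"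
  proof (rule normal_dir[OF zs])
    fix t :: real assume t: "0 < t" "t \<le> 1"
    have "AE x in lebesgue_on \<Omega>. \<alpha> x + al0 x \<le> ub x \<and> ub x \<le> \<beta> x + (be0 x + t * d' x)"
      using ubAE
    proof eventually_elim
      case (elim x)
      have "min (d' x) 0 \<le> t * d' x" by (rule scale_ge_min[OF t])
      moreover have "ub x - \<beta> x - be0 x \<le> d' x" using elim by (simp add: d'_def)
      ultimately show ?case using elim by linarith
    qed
    then have "((y0, J0, al0, \<lambda>x. be0 x + t * d' x), ub) \<in> gphUad \<Omega> \<alpha> \<beta>"
      by (rule gph_mem[OF Lb(1,2,3) L2_addscale[OF Lb(4) Ld'] Lb(5)])
    moreover have "Psub ((y0, J0, al0, \<lambda>x. be0 x + t * d' x), ub) ((y0,J0,al0,be0),ub)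
       = Pscale t ((\<lambda>x. 0, \<lambda>x. 0, \<lambda>x. 0, d'), \<lambda>x. 0)"
      by (simp add: Psub_eq Pscale_eq)
    ultimately show "\<exists>z\<in>gphUad \<Omega> \<alpha> \<beta>. Psub z ((y0,J0,al0,be0),ub) = Pscale t ((\<lambda>x. 0, \<lambda>x. 0, \<lambda>x. 0, d'), \<lambda>x. 0)"
      by blast
  qed
  then have "l2ip \<Omega> a4 d' \<le> 0" by (simp add: Ppair_eq l2ip_zero)
  moreover have "AE x in lebesgue_on \<Omega>. 0 \<le> a4 x * d' x"
  proof (intro AE_I2)
    fix x
    show "0 \<le> a4 x * d' x"
    proof (cases "0 \<le> a4 x")
      case True
      then have "d' x = a4 x" by (simp add: d'_def)
      then show ?thesis by simp
    next
      case False
      then have "d' x \<le> 0" by (simp add: d'_def)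
      then show ?thesis using False by (simp add: mult_nonpos_nonpos)
    qed
  qed
  ultimately have "AE x in lebesgue_on \<Omega>. a4 x * d' x = 0" by (intro sq_int_le0 La Ld')
  then have R5: "AE x in lebesgue_on \<Omega>. a4 x \<le> 0 \<and> (x \<notin> Omega3 \<Omega> \<beta> (y0,J0,al0,be0) ub \<longrightarrow> a4 x = 0)"
    using ubAE AE_space[of "lebesgue_on \<Omega>"]
  proof eventually_elim
    case (elim x)
    then show ?case by (auto simp: d'_def Omega3_def e_be_def min_def max_def split: if_splits)
  qed
  show ?thesis using R1 R2 R3 R4 R5 by (auto elim: AE_mp)
qed

lemma core_sup:
  fixes y0 J0 al0 be0 ub a1 a2 a3 a4 us \<alpha> \<beta> :: "real^'n \<Rightarrow> real"
  assumes eb: "(y0,J0,al0,be0) \<in> Esp \<Omega>" and ub: "ub \<in> Uad \<Omega> \<alpha> \<beta> (y0,J0,al0,be0)"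
    and es: "(a1,a2,a3,a4) \<in> Esp \<Omega>" and us: "us \<in> L2sp \<Omega>"
    and R1: "AE x in lebesgue_on \<Omega>. a1 x = 0"
    and R2: "AE x in lebesgue_on \<Omega>. a2 x = 0"
    and R3: "AE x in lebesgue_on \<Omega>. us x = - a3 x - a4 x"
    and R4: "AE x in lebesgue_on \<Omega>. x \<in> Omega1 \<Omega> \<alpha> (y0,J0,al0,be0) ub \<longrightarrow> a3 x \<ge> 0"
    and R5: "AE x in lebesgue_on \<Omega>. x \<notin> Omega1 \<Omega> \<alpha> (y0,J0,al0,be0) ub \<longrightarrow> a3 x = 0"
    and R6: "AE x in lebesgue_on \<Omega>. x \<in> Omega3 \<Omega> \<beta> (y0,J0,al0,be0) ub \<longrightarrow> a4 x \<le> 0"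
    and R7: "AE x in lebesgue_on \<Omega>. x \<notin> Omega3 \<Omega> \<beta> (y0,J0,al0,be0) ub \<longrightarrow> a4 x = 0"
  shows "((a1,a2,a3,a4),us) \<in> frechet_normal_cone \<Omega> (gphUad \<Omega> \<alpha> \<beta>) ((y0,J0,al0,be0),ub)"
proof -
  have La: "a1 \<in> L2sp \<Omega>" "a2 \<in> L2sp \<Omega>" "a3 \<in> L2sp \<Omega>" "a4 \<in> L2sp \<Omega>"
    using es by (auto simp: Esp_def e_y_def e_J_def e_al_def e_be_def)
  have Lb: "y0 \<in> L2sp \<Omega>" "J0 \<in> L2sp \<Omega>" "al0 \<in> L2sp \<Omega>" "be0 \<in> L2sp \<Omega>" "ub \<in> L2sp \<Omega>"
    using eb ub by (auto simp: Esp_def Uad_def e_y_def e_J_def e_al_def e_be_def)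
  have zb: "((y0,J0,al0,be0),ub) \<in> gphUad \<Omega> \<alpha> \<beta>" using eb ub by (simp add: gphUad_def)
  have key: "Ppair \<Omega> ((a1,a2,a3,a4),us) (Psub z ((y0,J0,al0,be0),ub)) \<le> 0"
    if z: "z \<in> gphUad \<Omega> \<alpha> \<beta>" for z
  proof -
    obtain e u where zeu: "z = (e,u)" by fastforce
    obtain y J al be where e: "e = (y,J,al,be)" by (cases e) auto
    have Le: "y \<in> L2sp \<Omega>" "J \<in> L2sp \<Omega>" "al \<in> L2sp \<Omega>" "be \<in> L2sp \<Omega>" "u \<in> L2sp \<Omega>"
      using z by (auto simp: zeu e gphUad_def Esp_def Uad_def e_y_def e_J_def e_al_def e_be_def)
    have uAE: "AE x in lebesgue_on \<Omega>. \<alpha> x + al x \<le> u x \<and> u x \<le> \<beta> x + be x"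
      using z by (simp add: zeu e gphUad_def Uad_def e_al_def e_be_def)
    have i3: "integrable (lebesgue_on \<Omega>) (\<lambda>x. a3 x * (al x - al0 x))"
      by (rule L2_prod[OF La(3) L2_diff'[OF Le(3) Lb(3)]])
    have i4: "integrable (lebesgue_on \<Omega>) (\<lambda>x. a4 x * (be x - be0 x))"
      by (rule L2_prod[OF La(4) L2_diff'[OF Le(4) Lb(4)]])
    have i5: "integrable (lebesgue_on \<Omega>) (\<lambda>x. us x * (u x - ub x))"
      by (rule L2_prod[OF us L2_diff'[OF Le(5) Lb(5)]])
    have "Ppair \<Omega> ((a1,a2,a3,a4),us) (Psub z ((y0,J0,al0,be0),ub))
      = l2ip \<Omega> a1 (\<lambda>x. y x - y0 x) + l2ip \<Omega> a2 (\<lambda>x. J x - J0 x)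
        + l2ip \<Omega> a3 (\<lambda>x. al x - al0 x) + l2ip \<Omega> a4 (\<lambda>x. be x - be0 x) + l2ip \<Omega> us (\<lambda>x. u x - ub x)"
      by (simp add: zeu e Psub_eq Ppair_eq)
    also have "\<dots> = integral\<^sup>L (lebesgue_on \<Omega>)
        (\<lambda>x. a3 x * (al x - al0 x) + a4 x * (be x - be0 x) + us x * (u x - ub x))"
      using l2ip_AE0[OF R1] l2ip_AE0[OF R2]
      by (simp add: l2ip_def Bochner_Integration.integral_add[OF Bochner_Integration.integrable_add[OF i3 i4] i5]
          Bochner_Integration.integral_add[OF i3 i4])
    also have "\<dots> \<le> integral\<^sup>L (lebesgue_on \<Omega>) (\<lambda>x. 0)"
    proof (rule integral_mono_AE)
      show "integrable (lebesgue_on \<Omega>)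
        (\<lambda>x. a3 x * (al x - al0 x) + a4 x * (be x - be0 x) + us x * (u x - ub x))"
        by (intro Bochner_Integration.integrable_add i3 i4 i5)
      show "integrable (lebesgue_on \<Omega>) (\<lambda>x. 0::real)" by simp
      show "AE x in lebesgue_on \<Omega>. a3 x * (al x - al0 x) + a4 x * (be x - be0 x) + us x * (u x - ub x) \<le> 0"
        using R3 R4 R5 R6 R7 uAE AE_space[of "lebesgue_on \<Omega>"]
      proof eventually_elim
        case (elim x)
        have A: "a3 x * (al x - al0 x - u x + ub x) \<le> 0"
        proof (cases "x \<in> Omega1 \<Omega> \<alpha> (y0,J0,al0,be0) ub")
          case True
          then have "ub x = \<alpha> x + al0 x" by (simp add: Omega1_def e_al_def)
          then have "al x - al0 x - u x + ub x \<le> 0" using elim by linarith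
          then show ?thesis using elim True by (simp add: mult_nonneg_nonpos)
        next
          case False
          then show ?thesis using elim by simp
        qed
        have B: "a4 x * (be x - be0 x - u x + ub x) \<le> 0"
        proof (cases "x \<in> Omega3 \<Omega> \<beta> (y0,J0,al0,be0) ub")
          case True
          then have "ub x = \<beta> x + be0 x" by (simp add: Omega3_def e_be_def)
          then have "0 \<le> be x - be0 x - u x + ub x" using elim by linarith
          then show ?thesis using elim True by (simp add: mult_nonpos_nonneg)
        next
          case False
          then show ?thesis using elim by simp
        qed
        have "a3 x * (al x - al0 x) + a4 x * (be x - be0 x) + us x * (u x - ub x)
          = a3 x * (al x - al0 x - u x + ub x) + a4 x * (be x - be0 x - u x + ub x)"
        proof -
          have "us x = - a3 x - a4 x" using elim by simp
          then show ?thesis by (simp only:) (simp add: algebra_simps)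
        qed
        then show ?case using A B by linarith
      qed
    qed
    finally show ?thesis by simp
  qed
  show ?thesis unfolding frechet_normal_cone_def
  proof (intro CollectI conjI allI impI)
    show "fst ((a1, a2, a3, a4), us) \<in> Esp \<Omega>" using es by simp
    show "snd ((a1, a2, a3, a4), us) \<in> L2sp \<Omega>" using us by simp
    show "((y0, J0, al0, be0), ub) \<in> gphUad \<Omega> \<alpha> \<beta>" by (rule zb)
    fix \<epsilon> :: real assume "0 < \<epsilon>"
    show "\<exists>\<delta>>0. \<forall>z\<in>gphUad \<Omega> \<alpha> \<beta>. Pnrm \<Omega> (Psub z ((y0, J0, al0, be0), ub)) < \<delta> \<longrightarrow>
        Ppair \<Omega> ((a1, a2, a3, a4), us) (Psub z ((y0, J0, al0, be0), ub))
        \<le> \<epsilon> * Pnrm \<Omega> (Psub z ((y0, J0, al0, be0), ub))"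
    proof (intro exI[of _ 1] conjI ballI impI)
      fix z assume "z \<in> gphUad \<Omega> \<alpha> \<beta>"
      then have "Ppair \<Omega> ((a1,a2,a3,a4),us) (Psub z ((y0,J0,al0,be0),ub)) \<le> 0" by (rule key)
      also have "0 \<le> \<epsilon> * Pnrm \<Omega> (Psub z ((y0, J0, al0, be0), ub))"
        using \<open>0 < \<epsilon>\<close> Pnrm_nonneg by (simp add: zero_le_mult_iff)
      finally show "Ppair \<Omega> ((a1, a2, a3, a4), us) (Psub z ((y0, J0, al0, be0), ub))
        \<le> \<epsilon> * Pnrm \<Omega> (Psub z ((y0, J0, al0, be0), ub))" .
    qed simp
  qed
qed

theorem lemma3p2:
  fixes \<Omega> :: "(real^'n) set"
    and a :: "'n \<Rightarrow> 'n \<Rightarrow> real^'n \<Rightarrow> real"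
    and f fy fyy L Ly Lyy :: "real^'n \<Rightarrow> real \<Rightarrow> real"
    and \<alpha> \<beta> \<zeta> :: "real^'n \<Rightarrow> real"
    and Q :: "(real^'n \<Rightarrow> real) set"
    and pbar :: real
    and eb :: "'n pert" and ub :: "real^'n \<Rightarrow> real"
  assumes dim: "CARD('n) \<le> 3"
    \<comment> \<open>data alpha, beta, zeta\<close>
    and alpha: "\<alpha> \<in> Linf \<Omega>" and beta: "\<beta> \<in> Linf \<Omega>"
    and alpha_le_beta: "AE x in lebesgue_on \<Omega>. \<alpha> x \<le> \<beta> x"
    and alpha_neq_beta: "\<not> (AE x in lebesgue_on \<Omega>. \<alpha> x = \<beta> x)"
    and zeta: "\<zeta> \<in> L2sp \<Omega>" "AE x in lebesgue_on \<Omega>. \<zeta> x \<ge> 0"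
    \<comment> \<open>exponent pbar\<close>
    and pbar: "pbar > real CARD('n) / 2"
    \<comment> \<open>(A1): f Caratheodory, C^2 in y, fy, fyy its derivatives\<close>
    and f_meas: "\<And>t. (\<lambda>x. f x t) \<in> borel_measurable (lebesgue_on \<Omega>)"
    and f_C2: "AE x in lebesgue_on \<Omega>. \<forall>t. (f x has_real_derivative fy x t) (at t) \<and>
                  (fy x has_real_derivative fyy x t) (at t) \<and> isCont (fyy x) t"
    and f0: "(\<lambda>x. f x 0) \<in> Lp \<Omega> pbar"
    and fy_nonneg: "AE x in lebesgue_on \<Omega>. \<forall>t. fy x t \<ge> 0"
    and f_bound: "\<And>M. \<exists>C. AE x in lebesgue_on \<Omega>. \<forall>t. \<bar>t\<bar> \<le> M \<longrightarrow> \<bar>fy x t\<bar> + \<bar>fyy x t\<bar> \<le> C"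
    and fyy_uc: "\<And>M \<epsilon>. \<epsilon> > 0 \<Longrightarrow> \<exists>\<delta>>0. AE x in lebesgue_on \<Omega>. \<forall>s t.
                  \<bar>s\<bar> \<le> M \<and> \<bar>t\<bar> \<le> M \<and> \<bar>s - t\<bar> < \<delta> \<longrightarrow> \<bar>fyy x s - fyy x t\<bar> < \<epsilon>"
    \<comment> \<open>(A2): L Caratheodory, C^2 in y, Ly, Lyy its derivatives\<close>
    and L_meas: "\<And>t. (\<lambda>x. L x t) \<in> borel_measurable (lebesgue_on \<Omega>)"
    and L_C2: "AE x in lebesgue_on \<Omega>. \<forall>t. (L x has_real_derivative Ly x t) (at t) \<and>
                  (Ly x has_real_derivative Lyy x t) (at t) \<and> isCont (Lyy x) t"
    and L0: "integrable (lebesgue_on \<Omega>) (\<lambda>x. L x 0)"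
    and Ly_bound: "\<And>M. \<exists>\<psi>. \<psi> \<in> Lp \<Omega> pbar \<and>
                      (AE x in lebesgue_on \<Omega>. \<forall>t. \<bar>t\<bar> \<le> M \<longrightarrow> \<bar>Ly x t\<bar> \<le> \<psi> x)"
    and Lyy_bound: "\<And>M. \<exists>C. AE x in lebesgue_on \<Omega>. \<forall>t. \<bar>t\<bar> \<le> M \<longrightarrow> \<bar>Lyy x t\<bar> \<le> C"
    and Lyy_uc: "\<And>M \<epsilon>. \<epsilon> > 0 \<Longrightarrow> \<exists>\<delta>>0. AE x in lebesgue_on \<Omega>. \<forall>s t.
                  \<bar>s\<bar> \<le> M \<and> \<bar>t\<bar> \<le> M \<and> \<bar>s - t\<bar> < \<delta> \<longrightarrow> \<bar>Lyy x s - Lyy x t\<bar> < \<epsilon>"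
    \<comment> \<open>(A3): domain\<close>
    and Omega_open: "open \<Omega>" and Omega_bdd: "bounded \<Omega>"
    and Omega_lip: "lipschitz_boundary \<Omega>"
    \<comment> \<open>(A3): Q closed convex bounded in L^2 (a set of L^2 classes)\<close>
    and Q_L2: "Q \<subseteq> L2sp \<Omega>"
    and Q_classes: "\<And>q v. q \<in> Q \<Longrightarrow> v \<in> L2sp \<Omega> \<Longrightarrow> (AE x in lebesgue_on \<Omega>. q x = v x) \<Longrightarrow> v \<in> Q"
    and Q_closed: "\<And>qs v. (\<forall>k. qs k \<in> Q) \<Longrightarrow> v \<in> L2sp \<Omega> \<Longrightarrow>
                      (\<lambda>k. l2nrm \<Omega> (qs k - v)) \<longlonglongrightarrow> 0 \<Longrightarrow> v \<in> Q"
    and Q_convex: "\<And>q1 q2 t. q1 \<in> Q \<Longrightarrow> q2 \<in> Q \<Longrightarrow> 0 \<le> t \<Longrightarrow> t \<le> 1 \<Longrightarrow>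
                      (\<lambda>x. t * q1 x + (1 - t) * q2 x) \<in> Q"
    and Q_bdd: "\<exists>C. \<forall>q\<in>Q. l2nrm \<Omega> q \<le> C"
    and Q_int: "\<exists>e0\<in>Esp \<Omega>. \<exists>u\<in>Uad \<Omega> \<alpha> \<beta> e0. \<exists>r>0.
                   \<forall>v\<in>L2sp \<Omega>. l2nrm \<Omega> (v - u) < r \<longrightarrow> v \<in> Q"
    \<comment> \<open>(A3): coefficients continuous on the closure, uniformly elliptic\<close>
    and a_cont: "\<And>i j. continuous_on (closure \<Omega>) (a i j)"
    and a_ell: "\<exists>lam>0. \<forall>x\<in>closure \<Omega>. \<forall>\<xi>::real^'n.
                   (\<Sum>i\<in>UNIV. \<Sum>j\<in>UNIV. a i j x * \<xi>$i * \<xi>$j) \<ge> lam * (norm \<xi>)^2"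
    \<comment> \<open>the reference point\<close>
    and eb: "eb \<in> Esp \<Omega>"
    and ub: "ub \<in> Sopt \<Omega> a f L \<zeta> \<alpha> \<beta> Q eb"
  shows "frechet_normal_cone \<Omega> (gphUad \<Omega> \<alpha> \<beta>) (eb, ub) =
    {(es, us). es \<in> Esp \<Omega> \<and> us \<in> L2sp \<Omega> \<and>
       (AE x in lebesgue_on \<Omega>. e_y es x = 0) \<and>
       (AE x in lebesgue_on \<Omega>. e_J es x = 0) \<and>
       (AE x in lebesgue_on \<Omega>. us x = - e_al es x - e_be es x) \<and>
       (AE x in lebesgue_on \<Omega>. x \<in> Omega1 \<Omega> \<alpha> eb ub \<longrightarrow> e_al es x \<ge> 0) \<and>
       (AE x in lebesgue_on \<Omega>. x \<notin> Omega1 \<Omega> \<alpha> eb ub \<longrightarrow> e_al es x = 0) \<and>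
       (AE x in lebesgue_on \<Omega>. x \<in> Omega3 \<Omega> \<beta> eb ub \<longrightarrow> e_be es x \<le> 0) \<and>
       (AE x in lebesgue_on \<Omega>. x \<notin> Omega3 \<Omega> \<beta> eb ub \<longrightarrow> e_be es x = 0)}"
proof -
  obtain y0 J0 al0 be0 where ebq: "eb = (y0,J0,al0,be0)" by (cases eb) auto
  have ubU: "ub \<in> Uad \<Omega> \<alpha> \<beta> (y0,J0,al0,be0)" using ub ebq by (simp add: Sopt_def Gfeas_def)
  have ebE: "(y0,J0,al0,be0) \<in> Esp \<Omega>" using eb ebq by simp
  have am: "\<alpha> \<in> borel_measurable (lebesgue_on \<Omega>)" using alpha by (simp add: Linf_def)
  have bm: "\<beta> \<in> borel_measurable (lebesgue_on \<Omega>)" using beta by (simp add: Linf_def)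
  show ?thesis
  proof (intro set_eqI iffI)
    fix z assume z: "z \<in> frechet_normal_cone \<Omega> (gphUad \<Omega> \<alpha> \<beta>) (eb, ub)"
    obtain es us where zq: "z = (es,us)" by fastforce
    obtain a1 a2 a3 a4 where esq: "es = (a1,a2,a3,a4)" by (cases es) auto
    have zz: "((a1,a2,a3,a4),us) \<in> frechet_normal_cone \<Omega> (gphUad \<Omega> \<alpha> \<beta>) ((y0,J0,al0,be0),ub)"
      using z zq esq ebq by simp
    have m: "es \<in> Esp \<Omega>" "us \<in> L2sp \<Omega>" using z zq by (auto simp: frechet_normal_cone_def)
    show "z \<in> {(es, us). es \<in> Esp \<Omega> \<and> us \<in> L2sp \<Omega> \<and>
       (AE x in lebesgue_on \<Omega>. e_y es x = 0) \<and>
       (AE x in lebesgue_on \<Omega>. e_J es x = 0) \<and>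
       (AE x in lebesgue_on \<Omega>. us x = - e_al es x - e_be es x) \<and>
       (AE x in lebesgue_on \<Omega>. x \<in> Omega1 \<Omega> \<alpha> eb ub \<longrightarrow> e_al es x \<ge> 0) \<and>
       (AE x in lebesgue_on \<Omega>. x \<notin> Omega1 \<Omega> \<alpha> eb ub \<longrightarrow> e_al es x = 0) \<and>
       (AE x in lebesgue_on \<Omega>. x \<in> Omega3 \<Omega> \<beta> eb ub \<longrightarrow> e_be es x \<le> 0) \<and>
       (AE x in lebesgue_on \<Omega>. x \<notin> Omega3 \<Omega> \<beta> eb ub \<longrightarrow> e_be es x = 0)}"
      using core_sub[OF ebE ubU am bm zz] m unfolding zq esq ebq
      by (simp add: e_y_def e_J_def e_al_def e_be_def)
  next
    fix z assume z: "z \<in> {(es, us). es \<in> Esp \<Omega> \<and> us \<in> L2sp \<Omega> \<and>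
       (AE x in lebesgue_on \<Omega>. e_y es x = 0) \<and>
       (AE x in lebesgue_on \<Omega>. e_J es x = 0) \<and>
       (AE x in lebesgue_on \<Omega>. us x = - e_al es x - e_be es x) \<and>
       (AE x in lebesgue_on \<Omega>. x \<in> Omega1 \<Omega> \<alpha> eb ub \<longrightarrow> e_al es x \<ge> 0) \<and>
       (AE x in lebesgue_on \<Omega>. x \<notin> Omega1 \<Omega> \<alpha> eb ub \<longrightarrow> e_al es x = 0) \<and>
       (AE x in lebesgue_on \<Omega>. x \<in> Omega3 \<Omega> \<beta> eb ub \<longrightarrow> e_be es x \<le> 0) \<and>
       (AE x in lebesgue_on \<Omega>. x \<notin> Omega3 \<Omega> \<beta> eb ub \<longrightarrow> e_be es x = 0)}"
    obtain es us where zq: "z = (es,us)" by fastforce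
    obtain a1 a2 a3 a4 where esq: "es = (a1,a2,a3,a4)" by (cases es) auto
    have H: "(a1,a2,a3,a4) \<in> Esp \<Omega>" "us \<in> L2sp \<Omega>"
       "AE x in lebesgue_on \<Omega>. a1 x = 0"
       "AE x in lebesgue_on \<Omega>. a2 x = 0"
       "AE x in lebesgue_on \<Omega>. us x = - a3 x - a4 x"
       "AE x in lebesgue_on \<Omega>. x \<in> Omega1 \<Omega> \<alpha> (y0,J0,al0,be0) ub \<longrightarrow> a3 x \<ge> 0"
       "AE x in lebesgue_on \<Omega>. x \<notin> Omega1 \<Omega> \<alpha> (y0,J0,al0,be0) ub \<longrightarrow> a3 x = 0"
       "AE x in lebesgue_on \<Omega>. x \<in> Omega3 \<Omega> \<beta> (y0,J0,al0,be0) ub \<longrightarrow> a4 x \<le> 0"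
       "AE x in lebesgue_on \<Omega>. x \<notin> Omega3 \<Omega> \<beta> (y0,J0,al0,be0) ub \<longrightarrow> a4 x = 0"
      using z unfolding zq esq ebq by (simp_all add: e_y_def e_J_def e_al_def e_be_def)
    show "z \<in> frechet_normal_cone \<Omega> (gphUad \<Omega> \<alpha> \<beta>) (eb, ub)"
      using core_sup[OF ebE ubU H] unfolding zq esq ebq .
  qed
qed

end
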